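(* Let $A$ be a circular $m\times n$ matrix, $\alpha$ a positive integer and $x^*\in Q(A,\alpha\mathbf{1})$. Then for every $i\in[m]$, in $D(A,x^* )$ (with $b=\alpha\mathbf{1}$): (i) $c^+_i(x^* )-c^+(P_i^+,x^* )=-\mu\alpha$, where $c^+(P_i^+,x^* )=\sum_{j=\ell_i}^{\ell_i+k_i-1}c^+_{m+j}(x^* )$ is the cost of the path $P_i^+$ of forward short arcs from $\ell_i-1$ to $\ell_i+k_i-1$; (ii) $c^-_i(x^* )-c^-(P_i^-,x^* )=-(1-\mu)\alpha$, where $c^-(P_i^-,x^* )=\sum_{j=\ell_i}^{\ell_i+k_i-1}c^-_{m+j}(x^* )$ is the cost of the path $P_i^-$ of reverse short arcs from $\ell_i+k_i-1$ to $\ell_i-1$. (Column indices $j$ are taken modulo $n$ in $[n]$.)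
   Context: Notation: $[n]=\{1,\dots,n\}$ with addition mod $n$ (index $0$ identified with $n$); for $a,c\in[n]$ with $t\ge0$ minimal such that $a+t\equiv c\pmod n$, $[a,c)_n=\{a,\dots,a+t-1\}$ (mod $n$). An $m\times n$ $\{0,1\}$-matrix $A$ is circular if for each row $i$ there are $\ell_i\in[n]$ and an integer $2\le k_i\le n-1$ with row $i$ the incidence vector of $[\ell_i,\ell_i+k_i)_n$. $Q(A,b)=\{x\ge0:Ax\ge b\}$. $D(A)$: node set $[n]$ (labels mod $n$); forward arcs $a_i=(\ell_i-1,\ell_i+k_i-1)$ ($i\in[m]$) and $a_{m+j}=(j-1,j)$ ($j\in[n]$); reverse arcs $\bar a_i=(\ell_i+k_i-1,\ell_i-1)$ and $\bar a_{m+j}=(j,j-1)$. Costs: $\tilde A=\binom{A}{I}$ ($I$ the $n\times n$ identity), $d=\binom{b}{0}$, $v$ = last column of $\tilde A$; for $x^*\in Q(A,b)$: $s^*=\tilde Ax^*-d$, $\mu=\lceil\mathbf{1}^Tx^*\rceil-\mathbf{1}^Tx^*$, $c^+(x^* )=\mu(s^*-(1-\mu)v)$, $c^-(x^* )=(1-\mu)(s^*+\mu v)$. In $D(A,x^* )$ arc $a_k$ ($k\in[m+n]$) has cost $c^+_k(x^* )$ and arc $\bar a_k$ has cost $c^-_k(x^* )$; the cost of a path is the sum of its arc costs. *)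

theory Defs
  imports Complex_Main
begin

text \<open>Labels are taken in [n] = {1..n}; an integer x is reduced mod n into [n]
  (residue 0 identified with n).\<close>
definition wrap :: "nat \<Rightarrow> nat \<Rightarrow> nat" where
  "wrap n x = (if x mod n = 0 then n else x mod n)"

definition circ_interval :: "nat \<Rightarrow> nat \<Rightarrow> nat \<Rightarrow> nat set" where
  "circ_interval n a c =
     (let t = (LEAST t. wrap n (a + t) = wrap n c) in {wrap n (a + s) | s. s < t})"

definition circular_with ::
  "nat \<Rightarrow> nat \<Rightarrow> (nat \<Rightarrow> nat \<Rightarrow> real) \<Rightarrow> (nat \<Rightarrow> nat) \<Rightarrow> (nat \<Rightarrow> nat) \<Rightarrow> bool" where
  "circular_with m n A l k \<longleftrightarrow>
     (\<forall>i\<in>{1..m}. l i \<in> {1..n} \<and> 2 \<le> k i \<and> k i \<le> n - 1 \<and>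
        (\<forall>j\<in>{1..n}. A i j =
           (if j \<in> circ_interval n (l i) (wrap n (l i + k i)) then 1 else 0)))"

definition circular :: "nat \<Rightarrow> nat \<Rightarrow> (nat \<Rightarrow> nat \<Rightarrow> real) \<Rightarrow> bool" where
  "circular m n A \<longleftrightarrow> (\<exists>l k. circular_with m n A l k)"

definition Qpoly ::
  "nat \<Rightarrow> nat \<Rightarrow> (nat \<Rightarrow> nat \<Rightarrow> real) \<Rightarrow> (nat \<Rightarrow> real) \<Rightarrow> (nat \<Rightarrow> real) set" where
  "Qpoly m n A b = {x. (\<forall>j\<in>{1..n}. 0 \<le> x j) \<and>
                       (\<forall>i\<in>{1..m}. (\<Sum>j=1..n. A i j * x j) \<ge> b i)}"

definition Atilde :: "nat \<Rightarrow> (nat \<Rightarrow> nat \<Rightarrow> real) \<Rightarrow> nat \<Rightarrow> nat \<Rightarrow> real" where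
  "Atilde m A r j = (if r \<le> m then A r j else (if r - m = j then 1 else 0))"

definition dvec :: "nat \<Rightarrow> (nat \<Rightarrow> real) \<Rightarrow> nat \<Rightarrow> real" where
  "dvec m b r = (if r \<le> m then b r else 0)"

definition vvec :: "nat \<Rightarrow> nat \<Rightarrow> (nat \<Rightarrow> nat \<Rightarrow> real) \<Rightarrow> nat \<Rightarrow> real" where
  "vvec m n A r = Atilde m A r n"

definition sstar ::
  "nat \<Rightarrow> nat \<Rightarrow> (nat \<Rightarrow> nat \<Rightarrow> real) \<Rightarrow> (nat \<Rightarrow> real) \<Rightarrow> (nat \<Rightarrow> real) \<Rightarrow> nat \<Rightarrow> real" where
  "sstar m n A b x r = (\<Sum>j=1..n. Atilde m A r j * x j) - dvec m b r"

definition mu :: "nat \<Rightarrow> (nat \<Rightarrow> real) \<Rightarrow> real" where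
  "mu n x = of_int \<lceil>\<Sum>j=1..n. x j\<rceil> - (\<Sum>j=1..n. x j)"

definition cplus ::
  "nat \<Rightarrow> nat \<Rightarrow> (nat \<Rightarrow> nat \<Rightarrow> real) \<Rightarrow> (nat \<Rightarrow> real) \<Rightarrow> (nat \<Rightarrow> real) \<Rightarrow> nat \<Rightarrow> real" where
  "cplus m n A b x r = mu n x * (sstar m n A b x r - (1 - mu n x) * vvec m n A r)"

definition cminus ::
  "nat \<Rightarrow> nat \<Rightarrow> (nat \<Rightarrow> nat \<Rightarrow> real) \<Rightarrow> (nat \<Rightarrow> real) \<Rightarrow> (nat \<Rightarrow> real) \<Rightarrow> nat \<Rightarrow> real" where
  "cminus m n A b x r = (1 - mu n x) * (sstar m n A b x r + mu n x * vvec m n A r)"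

end

theory Submission
  imports Defs
begin

lemma wrap_eq_iff: "n > 0 \<Longrightarrow> wrap n a = wrap n b \<longleftrightarrow> a mod n = b mod n"
  unfolding wrap_def
  by (smt (verit) mod_less_divisor nat_neq_iff)

lemma wrap_in: "n > 0 \<Longrightarrow> wrap n a \<in> {1..n}"
  unfolding wrap_def by (auto simp: less_imp_le_nat)

lemma mod_cancel_small:
  fixes l t s n :: nat
  assumes "(l + t) mod n = (l + s) mod n" "t < n" "s < n"
  shows "t = s"
proof (rule ccontr)
  assume ne: "t \<noteq> s"
  { fix a b :: nat assume h: "(l + a) mod n = (l + b) mod n" "b < a" "a < n"
    hence "n dvd (l + a) - (l + b)" using mod_eq_dvd_iff_nat[of "l + b" "l + a" n] by simp
    hence "n dvd a - b" by simp
    moreover have "0 < a - b" "a - b < n" using h by auto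
    ultimately have False using nat_dvd_not_less by blast }
  thus False using assms ne by (metis nat_neq_iff)
qed

lemma circ_eq:
  assumes "k < n"
  shows "circ_interval n l (wrap n (l + k)) = (\<lambda>t. wrap n (l + t)) ` {..<k}"
proof -
  have n: "n > 0" using assms by simp
  have "(LEAST t. wrap n (l + t) = wrap n (wrap n (l + k))) = k"
  proof (rule Least_equality)
    have ww: "wrap n (wrap n y) = wrap n y" for y
      using n unfolding wrap_def by auto
    show "wrap n (l + k) = wrap n (wrap n (l + k))" by (simp add: ww)
    fix y assume "wrap n (l + y) = wrap n (wrap n (l + k))"
    hence "(l + y) mod n = (l + k) mod n" using n ww wrap_eq_iff by metis
    show "k \<le> y"
    proof (rule ccontr)
      assume "\<not> k \<le> y"
      hence "y < n" using assms by simp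
      with \<open>(l + y) mod n = (l + k) mod n\<close> assms have "y = k" using mod_cancel_small by blast
      with \<open>\<not> k \<le> y\<close> show False by simp
    qed
  qed
  thus ?thesis unfolding circ_interval_def Let_def by auto
qed

theorem lemma5p1:
  fixes m n :: nat and A :: "nat \<Rightarrow> nat \<Rightarrow> real" and l k :: "nat \<Rightarrow> nat"
    and \<alpha> :: nat and x :: "nat \<Rightarrow> real" and i :: nat
  assumes circ: "circular_with m n A l k"
    and alpha_pos: "\<alpha> > 0"
    and xQ: "x \<in> Qpoly m n A (\<lambda>_. real \<alpha>)"
    and i: "i \<in> {1..m}"
  shows "cplus m n A (\<lambda>_. real \<alpha>) x i
           - (\<Sum>t<k i. cplus m n A (\<lambda>_. real \<alpha>) x (m + wrap n (l i + t)))
         = - mu n x * real \<alpha> \<and>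
         cminus m n A (\<lambda>_. real \<alpha>) x i
           - (\<Sum>t<k i. cminus m n A (\<lambda>_. real \<alpha>) x (m + wrap n (l i + t)))
         = - (1 - mu n x) * real \<alpha>"
proof -
  define W where "W t = wrap n (l i + t)" for t
  define K where "K = {..<k i}"
  define S where "S = W ` K"
  have ci: "l i \<in> {1..n}" "2 \<le> k i" "k i \<le> n - 1"
    and Aij: "\<And>j. j \<in> {1..n} \<Longrightarrow> A i j = (if j \<in> circ_interval n (l i) (wrap n (l i + k i)) then 1 else 0)"
    using circ i unfolding circular_with_def by auto
  have kn: "k i < n" using ci by linarith
  have n: "n > 0" using kn by simp
  have CS: "circ_interval n (l i) (wrap n (l i + k i)) = S"
    unfolding S_def W_def K_def by (rule circ_eq[OF kn])
  have Win: "W t \<in> {1..n}" for t unfolding W_def using wrap_in[OF n] .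
  have inj: "inj_on W K"
  proof (rule inj_onI)
    fix a b assume "a \<in> K" "b \<in> K" "W a = W b"
    hence "(l i + a) mod n = (l i + b) mod n" "a < n" "b < n"
      using wrap_eq_iff[OF n] kn unfolding W_def K_def by auto
    thus "a = b" using mod_cancel_small by blast
  qed
  have Ssub: "S \<subseteq> {1..n}" unfolding S_def using Win by auto
  define s where "s = (\<Sum>t\<in>K. x (W t))"
  define e :: real where "e = (if n \<in> S then 1 else 0)"
  have rowsum: "(\<Sum>j=1..n. A i j * x j) = s"
  proof -
    have "(\<Sum>j=1..n. A i j * x j) = (\<Sum>j=1..n. if j \<in> S then x j else 0)"
      by (rule sum.cong) (auto simp: Aij CS)
    also have "\<dots> = (\<Sum>j\<in>S. x j)"
    proof -
      have "{1..n} \<inter> S = S" using Ssub by blast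
      thus ?thesis by (simp add: sum.If_cases)
    qed
    also have "\<dots> = s" unfolding s_def S_def using sum.reindex[OF inj] by simp
    finally show ?thesis .
  qed
  have im: "i \<le> m" using i by simp
  have sti: "sstar m n A (\<lambda>_. real \<alpha>) x i = s - \<alpha>"
    unfolding sstar_def Atilde_def dvec_def using im rowsum by simp
  have vi: "vvec m n A i = e"
    unfolding vvec_def Atilde_def e_def using im Aij[of n] n CS by simp
  have stt: "sstar m n A (\<lambda>_. real \<alpha>) x (m + W t) = x (W t)" for t
  proof -
    have "sstar m n A (\<lambda>_. real \<alpha>) x (m + W t) = (\<Sum>j=1..n. (if W t = j then 1 else 0) * x j)"
      unfolding sstar_def Atilde_def dvec_def using Win[of t] by simp
    also have "\<dots> = (\<Sum>j=1..n. if W t = j then x j else 0)" by (rule sum.cong) auto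
    also have "\<dots> = x (W t)" using Win[of t] by (simp add: sum.delta)
    finally show ?thesis .
  qed
  have vt: "vvec m n A (m + W t) = (if W t = n then 1 else 0)" for t
    unfolding vvec_def Atilde_def using Win[of t] by auto
  have esum: "(\<Sum>t\<in>K. (if W t = n then 1 else 0::real)) = e"
  proof -
    have "(\<Sum>t\<in>K. (if W t = n then 1 else 0::real)) = (\<Sum>j\<in>S. (if j = n then 1 else 0::real))"
      unfolding S_def using sum.reindex[OF inj, of "\<lambda>j. if j = n then 1 else 0::real"] by simp
    also have "\<dots> = e" unfolding e_def using finite_imageI[of K W] K_def S_def
      by (simp add: sum.delta)
    finally show ?thesis .
  qed
  define u where "u = mu n x"
  have P: "(\<Sum>t<k i. cplus m n A (\<lambda>_. real \<alpha>) x (m + wrap n (l i + t))) = u * (s - (1 - u) * e)"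
  proof -
    have "(\<Sum>t<k i. cplus m n A (\<lambda>_. real \<alpha>) x (m + wrap n (l i + t)))
        = (\<Sum>t\<in>K. u * x (W t) - u * (1 - u) * (if W t = n then 1 else 0))"
      unfolding K_def cplus_def u_def W_def[symmetric]
      by (rule sum.cong) (auto simp: stt vt algebra_simps)
    also have "\<dots> = u * s - u * (1 - u) * e"
      by (simp add: sum_subtractf sum_distrib_left[symmetric] s_def esum)
    finally show ?thesis by (simp add: algebra_simps)
  qed
  have M: "(\<Sum>t<k i. cminus m n A (\<lambda>_. real \<alpha>) x (m + wrap n (l i + t))) = (1 - u) * (s + u * e)"
  proof -
    have "(\<Sum>t<k i. cminus m n A (\<lambda>_. real \<alpha>) x (m + wrap n (l i + t)))
        = (\<Sum>t\<in>K. (1 - u) * x (W t) + (1 - u) * u * (if W t = n then 1 else 0))"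
      unfolding K_def cminus_def u_def W_def[symmetric]
      by (rule sum.cong) (auto simp: stt vt algebra_simps)
    also have "\<dots> = (1 - u) * s + (1 - u) * u * e"
      by (simp add: sum.distrib sum_distrib_left[symmetric] s_def esum)
    finally show ?thesis by (simp add: algebra_simps)
  qed
  show ?thesis
    unfolding P M
    unfolding cplus_def cminus_def sti vi u_def[symmetric]
    by (simp add: algebra_simps)
qed

end
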